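(* Let $\lambda\in\mathbb{R}$, let $r,k\ge1$ be integers and let $z\in\mathbb{C}$. Then \[ \phi_{k,\lambda}^{(r,r)}(|z|^2)=e^{-|z|^2}\sum_{n=1}^{\infty}\frac{(|z|^2)^n}{n!}\big((n)_r\big)_{k,\lambda}. \] In particular, when $|z|=1$, \[ \phi_{k,\lambda}^{(r,r)}=\frac{1}{e}\sum_{n=1}^{\infty}\frac{1}{n!}\big((n)_r\big)_{k,\lambda}. \]
   Context: Notation: $(x)_0=1$, $(x)_m=x(x-1)\cdots(x-m+1)$; $(y)_{0,\lambda}=1$, $(y)_{k,\lambda}=y(y-\lambda)\cdots(y-(k-1)\lambda)$. Let $D=\frac{d}{dx}$ and let $x$ also denote multiplication by $x$. The numbers $S_\lambda^{(r,r)}(k,j)$, $0\le j\le kr$, are defined by the operator identity $\prod_{i=0}^{k-1}\big(x^{r}D^{r}-i\lambda\big)=\sum_{j=0}^{kr}S_\lambda^{(r,r)}(k,j)\,x^{j}D^{j}$ (equivalently, the boson normal ordering $\prod_{i=0}^{k-1}\big((a^{\dagger})^{r}a^{r}-i\lambda\big)=\sum_{j=0}^{kr}S_\lambda^{(r,r)}(k,j)(a^{\dagger})^{j}a^{j}$ with $[a,a^{\dagger}]=1$), and $\phi_{k,\lambda}^{(r,r)}(x)=\sum_{j=0}^{kr}S_\lambda^{(r,r)}(k,j)x^j$, $\phi_{k,\lambda}^{(r,r)}=\phi_{k,\lambda}^{(r,r)}(1)$. *)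

theory Defs
  imports "HOL-Analysis.Analysis" "HOL-Computational_Algebra.Polynomial"
begin

definition falling :: "real \<Rightarrow> nat \<Rightarrow> real" where
  "falling x m = (\<Prod>i<m. x - of_nat i)"

definition dfalling :: "real \<Rightarrow> nat \<Rightarrow> real \<Rightarrow> real" where
  "dfalling y k lam = (\<Prod>i<k. y - of_nat i * lam)"

definition xD :: "nat \<Rightarrow> real poly \<Rightarrow> real poly" where
  "xD j p = monom 1 j * (pderiv ^^ j) p"

text \<open>The operator product prod_{i=0}^{k-1} (x^r D^r - i lambda) (the factors commute).\<close>
fun prodop :: "real \<Rightarrow> nat \<Rightarrow> nat \<Rightarrow> real poly \<Rightarrow> real poly" where
  "prodop lam r 0 p = p"
| "prodop lam r (Suc k) p = xD r (prodop lam r k p) - smult (of_nat k * lam) (prodop lam r k p)"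

text \<open>S_lambda^{(r,r)}(k,j), 0 <= j <= kr, defined by the operator identity
  prod_{i<k}(x^r D^r - i lambda) = sum_{j=0}^{kr} S(k,j) x^j D^j (as operators on polynomials).\<close>
definition Sgen :: "real \<Rightarrow> nat \<Rightarrow> nat \<Rightarrow> nat \<Rightarrow> real" where
  "Sgen lam r k = (THE c. (\<forall>j. k * r < j \<longrightarrow> c j = 0) \<and>
       (\<forall>p. prodop lam r k p = (\<Sum>j\<le>k*r. smult (c j) (xD j p))))"

definition phi :: "nat \<Rightarrow> real \<Rightarrow> nat \<Rightarrow> real \<Rightarrow> real" where
  "phi k lam r x = (\<Sum>j\<le>k*r. Sgen lam r k j * x ^ j)"

end

theory Submission
  imports Defs
begin

lemma falling_Suc: "falling x (Suc j) = falling x j * (x - of_nat j)"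
  by (simp add: falling_def)

lemma dfalling_Suc: "dfalling y (Suc k) lam = dfalling y k lam * (y - of_nat k * lam)"
  by (simp add: dfalling_def)

lemma falling_nat_zero: "m < j \<Longrightarrow> falling (real m) j = 0"
  unfolding falling_def by (rule prod_zero) (auto intro!: bexI[of _ m])

lemma coeff_pderiv_pow: "coeff ((pderiv ^^ j) p) i = falling (real (i + j)) j * coeff p (i + j)"
proof (induction j arbitrary: i)
  case 0 then show ?case by (simp add: falling_def)
next
  case (Suc j)
  have "coeff ((pderiv ^^ Suc j) p) i = real (Suc i) * coeff ((pderiv ^^ j) p) (Suc i)"
    by (simp add: coeff_pderiv)
  also have "\<dots> = real (Suc i) * (falling (real (Suc i + j)) j * coeff p (Suc i + j))"
    using Suc by (simp del: of_nat_add add: of_nat_add[symmetric])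
  also have "\<dots> = falling (real (i + Suc j)) (Suc j) * coeff p (i + Suc j)"
    by (simp add: falling_Suc algebra_simps)
  finally show ?case .
qed

lemma coeff_xD: "coeff (xD j p) m = falling (real m) j * coeff p m"
proof (cases "m < j")
  case True then show ?thesis by (simp add: xD_def coeff_monom_mult falling_nat_zero)
next
  case False then show ?thesis by (simp add: xD_def coeff_monom_mult coeff_pderiv_pow)
qed

lemma coeff_prodop: "coeff (prodop lam r k p) m = dfalling (falling (real m) r) k lam * coeff p m"
  by (induction k) (auto simp: dfalling_def coeff_xD algebra_simps)

definition gfun where "gfun lam r k m = dfalling (falling (real m) r) k lam"

lemma op_iff: "(\<forall>p. prodop lam r k p = (\<Sum>j\<le>N. smult (c j) (xD j p))) \<longleftrightarrow>
   (\<forall>m. (\<Sum>j\<le>N. c j * falling (real m) j) = gfun lam r k m)"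
proof
  assume H: "\<forall>p. prodop lam r k p = (\<Sum>j\<le>N. smult (c j) (xD j p))"
  show "\<forall>m. (\<Sum>j\<le>N. c j * falling (real m) j) = gfun lam r k m"
  proof
    fix m
    have "coeff (prodop lam r k (monom 1 m)) m = coeff (\<Sum>j\<le>N. smult (c j) (xD j (monom 1 m))) m"
      using H by simp
    then show "(\<Sum>j\<le>N. c j * falling (real m) j) = gfun lam r k m"
      by (simp add: coeff_prodop coeff_xD coeff_sum gfun_def)
  qed
next
  assume H: "\<forall>m. (\<Sum>j\<le>N. c j * falling (real m) j) = gfun lam r k m"
  show "\<forall>p. prodop lam r k p = (\<Sum>j\<le>N. smult (c j) (xD j p))"
  proof (intro allI poly_eqI)
    fix p m
    have "coeff (\<Sum>j\<le>N. smult (c j) (xD j p)) m = (\<Sum>j\<le>N. c j * falling (real m) j) * coeff p m"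
      by (simp add: coeff_sum coeff_xD sum_distrib_left mult_ac)
    then show "coeff (prodop lam r k p) m = coeff (\<Sum>j\<le>N. smult (c j) (xD j p)) m"
      using H by (simp add: coeff_prodop gfun_def)
  qed
qed

definition FP :: "nat \<Rightarrow> real poly" where "FP n = (\<Prod>i<n. [:- of_nat i, 1:])"

lemma poly_FP: "poly (FP n) x = falling x n"
  by (simp add: FP_def poly_prod falling_def)

lemma degree_FP: "degree (FP n) = n"
proof -
  have "degree (FP n) = (\<Sum>i<n. degree [:- of_nat i, 1::real:])"
    unfolding FP_def by (rule degree_prod_sum_eq) auto
  then show ?thesis by simp
qed

lemma lead_FP: "coeff (FP n) n = 1"
proof -
  have "lead_coeff (FP n) = (\<Prod>i<n. lead_coeff [:- of_nat i, 1::real:])"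
    unfolding FP_def by (rule lead_coeff_prod)
  then show ?thesis by (simp add: degree_FP)
qed

lemma falling_basis:
  "degree P \<le> N \<Longrightarrow> \<exists>c. (\<forall>j>N. c j = 0) \<and> (\<forall>x. poly P x = (\<Sum>j\<le>N. c j * falling x j))"
proof (induction N arbitrary: P)
  case 0
  then obtain a where "P = [:a:]" using degree0_coeffs by blast
  then show ?case
    by (intro exI[of _ "\<lambda>j. if j = 0 then a else 0"]) (auto simp: falling_def)
next
  case (Suc N)
  define Q where "Q = P - smult (coeff P (Suc N)) (FP (Suc N))"
  have "degree Q \<le> N"
  proof (rule degree_le, intro allI impI)
    fix i assume "N < i"
    show "coeff Q i = 0"
    proof (cases "i = Suc N")
      case True then show ?thesis by (simp add: Q_def lead_FP)
    next
      case False
      then have "i > Suc N" "i > degree P" "i > degree (FP (Suc N))" using `N < i` Suc.prems degree_FP by auto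
      then show ?thesis by (simp add: Q_def coeff_eq_0)
    qed
  qed
  then obtain c where c: "\<forall>j>N. c j = 0" "\<forall>x. poly Q x = (\<Sum>j\<le>N. c j * falling x j)"
    using Suc.IH by blast
  show ?case
  proof (intro exI[of _ "c(Suc N := coeff P (Suc N))"] conjI allI impI)
    fix j assume "Suc N < j" then show "(c(Suc N := coeff P (Suc N))) j = 0" using c by auto
  next
    fix x
    have "poly P x = poly Q x + coeff P (Suc N) * falling x (Suc N)"
      by (simp add: Q_def poly_FP)
    also have "\<dots> = (\<Sum>j\<le>Suc N. (c(Suc N := coeff P (Suc N))) j * falling x j)"
      using c by simp
    finally show "poly P x = (\<Sum>j\<le>Suc N. (c(Suc N := coeff P (Suc N))) j * falling x j)" .
  qed
qed

lemma exists_good: "\<exists>c. (\<forall>j. k * r < j \<longrightarrow> c j = 0) \<and>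
   (\<forall>m. (\<Sum>j\<le>k*r. c j * falling (real m) j) = gfun lam r k m)"
proof -
  define G where "G = (\<Prod>i<k. FP r - [:of_nat i * lam:])"
  have "degree G \<le> (\<Sum>i<k. degree (FP r - [:of_nat i * lam:]))"
    unfolding G_def using degree_prod_sum_le[of "{..<k}"] by (simp add: o_def)
  also have "\<dots> \<le> (\<Sum>i<k. r)"
    by (intro sum_mono degree_diff_le) (auto simp: degree_FP)
  finally have "degree G \<le> k * r" by simp
  then obtain c where c: "\<forall>j>k*r. c j = 0" "\<forall>x. poly G x = (\<Sum>j\<le>k*r. c j * falling x j)"
    using falling_basis by blast
  have "poly G (real m) = gfun lam r k m" for m
    by (simp add: G_def poly_prod poly_FP gfun_def dfalling_def)
  then show ?thesis using c by (intro exI[of _ c]) simp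
qed

lemma falling_self_nz: "falling (real j) j \<noteq> 0"
  unfolding falling_def by (rule prod_pos[THEN less_imp_neq, symmetric]) auto

lemma unique_good:
  assumes "\<forall>j. N < j \<longrightarrow> c j = 0" "\<forall>m. (\<Sum>j\<le>N. c j * falling (real m) j) = g m"
    "\<forall>j. N < j \<longrightarrow> d j = 0" "\<forall>m. (\<Sum>j\<le>N. d j * falling (real m) j) = g m"
  shows "c = d"
proof -
  define e where "e j = c j - d j" for j
  have E: "(\<Sum>j\<le>N. e j * falling (real m) j) = 0" for m
    using assms by (simp add: e_def left_diff_distrib sum_subtractf)
  have "e j = 0" for j
  proof (induction j rule: less_induct)
    case (less j)
    show ?case
    proof (cases "j \<le> N")
      case False then show ?thesis using assms by (simp add: e_def)
    next
      case True
      have "0 = (\<Sum>i\<le>N. e i * falling (real j) i)" using E by simp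
      also have "\<dots> = e j * falling (real j) j"
      proof (rule sum.mono_neutral_right[where S="{j}", simplified])
        show "\<forall>i\<in>{..N} - {j}. e i * falling (real j) i = 0"
        proof
          fix i assume "i \<in> {..N} - {j}"
          then have "i < j \<or> j < i" by auto
          then show "e i * falling (real j) i = 0"
            using less.IH falling_nat_zero[of j i] by auto
        qed
      qed (use True in auto)
      finally show ?thesis using falling_self_nz by simp
    qed
  qed
  then show ?thesis by (auto simp: e_def)
qed

lemma Sgen_good: "(\<forall>j. k * r < j \<longrightarrow> Sgen lam r k j = 0) \<and>
   (\<forall>m. (\<Sum>j\<le>k*r. Sgen lam r k j * falling (real m) j) = gfun lam r k m)"
proof -
  have "\<exists>!c. (\<forall>j. k * r < j \<longrightarrow> c j = 0) \<and>
   (\<forall>m. (\<Sum>j\<le>k*r. c j * falling (real m) j) = gfun lam r k m)"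
    by (rule ex_ex1I[OF exists_good], rule unique_good[where g="gfun lam r k"]) auto
  then show ?thesis unfolding Sgen_def op_iff by (rule theI')
qed

lemma falling_Suc_shift: "falling x (Suc j) = x * falling (x - 1) j"
  unfolding falling_def prod.lessThan_Suc_shift by (simp add: algebra_simps)

lemma falling_fact: "falling (real (i + j)) j * fact i = fact (i + j)"
proof (induction j)
  case 0 then show ?case by (simp add: falling_def)
next
  case (Suc j)
  have "falling (real (i + Suc j)) (Suc j) * fact i = real (Suc (i + j)) * (falling (real (i + j)) j * fact i)"
    by (simp add: falling_Suc_shift)
  also have "\<dots> = fact (i + Suc j)" using Suc by simp
  finally show ?case .
qed

lemma sums_fall: "(\<lambda>n. x ^ n / fact n * falling (real n) j) sums (x ^ j * exp x)"
proof -
  have A: "(\<lambda>i. x ^ (i + j) / fact (i + j) * falling (real (i + j)) j) = (\<lambda>i. x ^ j * (x ^ i /\<^sub>R fact i))"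
  proof
    fix i
    have "falling (real (i + j)) j = fact (i + j) / fact i"
      using falling_fact[of i j] by (simp add: field_simps)
    then show "x ^ (i + j) / fact (i + j) * falling (real (i + j)) j = x ^ j * (x ^ i /\<^sub>R fact i)"
      by (simp add: power_add divide_simps)
  qed
  have "(\<lambda>i. x ^ (i + j) / fact (i + j) * falling (real (i + j)) j) sums (x ^ j * exp x)"
    unfolding A by (rule sums_mult[OF exp_converges])
  moreover have "(\<Sum>i<j. x ^ i / fact i * falling (real i) j) = 0"
    by (rule sum.neutral) (auto simp: falling_nat_zero)
  ultimately show ?thesis
    using sums_iff_shift[where f="\<lambda>n. x ^ n / fact n * falling (real n) j" and n=j] by simp
qed

lemma phi_series:
  assumes "r \<ge> 1" "k \<ge> 1"
  shows "phi k lam r x = exp (- x) *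
     (\<Sum>n. x ^ (n+1) / fact (n+1) * dfalling (falling (real (n+1)) r) k lam)"
proof -
  let ?c = "Sgen lam r k"
  have S: "(\<lambda>n. \<Sum>j\<le>k*r. ?c j * (x ^ n / fact n * falling (real n) j)) sums (\<Sum>j\<le>k*r. ?c j * (x ^ j * exp x))"
    by (rule sums_sum) (rule sums_mult[OF sums_fall])
  have "(\<lambda>n. \<Sum>j\<le>k*r. ?c j * (x ^ n / fact n * falling (real n) j)) = (\<lambda>n. x ^ n / fact n * gfun lam r k n)"
  proof
    fix n
    have "(\<Sum>j\<le>k*r. ?c j * (x ^ n / fact n * falling (real n) j)) = x ^ n / fact n * (\<Sum>j\<le>k*r. ?c j * falling (real n) j)"
      by (simp add: sum_distrib_left mult_ac)
    then show "(\<Sum>j\<le>k*r. ?c j * (x ^ n / fact n * falling (real n) j)) = x ^ n / fact n * gfun lam r k n"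
      using Sgen_good[of k r lam] by simp
  qed
  moreover have "(\<Sum>j\<le>k*r. ?c j * (x ^ j * exp x)) = exp x * phi k lam r x"
    by (simp add: phi_def sum_distrib_left mult_ac)
  ultimately have S2: "(\<lambda>n. x ^ n / fact n * gfun lam r k n) sums (exp x * phi k lam r x)" using S by simp
  have g0: "gfun lam r k 0 = 0"
  proof -
    have "falling 0 r = 0" using assms falling_nat_zero[of 0 r] by simp
    moreover have "dfalling 0 k lam = 0" unfolding dfalling_def
      by (rule prod_zero) (use assms in \<open>auto intro!: bexI[of _ 0]\<close>)
    ultimately show ?thesis by (simp add: gfun_def)
  qed
  have "(\<lambda>n. x ^ (Suc n) / fact (Suc n) * gfun lam r k (Suc n)) sums (exp x * phi k lam r x)"
    using S2 g0 sums_Suc_iff[where f="\<lambda>n. x ^ n / fact n * gfun lam r k n"] by simp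
  then have "(\<Sum>n. x ^ (n+1) / fact (n+1) * dfalling (falling (real (n+1)) r) k lam) = exp x * phi k lam r x"
    by (simp add: gfun_def sums_iff)
  then show ?thesis by (simp add: exp_minus field_simps)
qed

theorem theorem10:
  fixes lam :: real and r k :: nat and z :: complex
  assumes "r \<ge> 1" and "k \<ge> 1"
  shows "phi k lam r ((cmod z)\<^sup>2) =
           exp (- (cmod z)\<^sup>2) *
             (\<Sum>n. ((cmod z)\<^sup>2) ^ (n+1) / fact (n+1) * dfalling (falling (real (n+1)) r) k lam)
       \<and> (cmod z = 1 \<longrightarrow>
           phi k lam r 1 = (1 / exp 1) *
             (\<Sum>n. 1 / fact (n+1) * dfalling (falling (real (n+1)) r) k lam))"
  using phi_series[OF assms, of lam "(cmod z)\<^sup>2"] phi_series[OF assms, of lam 1]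
  by (simp add: exp_minus divide_inverse mult.commute)

end
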